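(* Let $f:\mathbb{R}^n\times\mathbb{R}^m\to\mathbb{R}$ and $g:\mathbb{R}^n\times\mathbb{R}^m\to\mathbb{R}^p$ be continuous. Assume that for every $x\in\mathbb{R}^n$, $f(x,\cdot)$ is strictly convex, $g(x,\cdot)$ is convex (componentwise), and the problem $\min_{u\in\mathbb{R}^m} f(x,u)$ subject to $g(x,u)\le 0$ has at least one minimizer; let $u^*(x)$ denote the (unique) minimizer. Then, for $x_0\in\mathbb{R}^n$, $u^*$ is locally bounded at $x_0$ if and only if local compact feasibility holds at $x_0$.
   Context: Local compact feasibility (LCF) holds at $x\in\mathbb{R}^n$ if there exist a compact set $K\subset\mathbb{R}^m$ and $\delta>0$ such that for all $y\in\mathbb{R}^n$ with $\|y-x\|<\delta$ there exists $u\in K$ with $g(y,u)\le 0$. A function $\varphi:\mathbb{R}^n\to\mathbb{R}^q$ is locally bounded at $x_0$ if there are a neighborhood $\breve{\mathcal{U}}$ of $x_0$ and $B>0$ with $\|\varphi(x)\|\le B$ for all $x\in\breve{\mathcal{U}}$. *)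

theory Defs
  imports "HOL-Analysis.Analysis"
begin

definition strictly_convex_on :: "'a::real_vector set \<Rightarrow> ('a \<Rightarrow> real) \<Rightarrow> bool" where
  "strictly_convex_on S h \<longleftrightarrow> convex S \<and>
     (\<forall>x\<in>S. \<forall>y\<in>S. \<forall>t::real. x \<noteq> y \<and> 0 < t \<and> t < 1 \<longrightarrow>
        h ((1 - t) *\<^sub>R x + t *\<^sub>R y) < (1 - t) * h x + t * h y)"

definition feasible :: "('n \<Rightarrow> 'm \<Rightarrow> real^'p) \<Rightarrow> 'n \<Rightarrow> 'm \<Rightarrow> bool" where
  "feasible g x u \<longleftrightarrow> (\<forall>i. g x u $ i \<le> 0)"

definition is_minimizer :: "('n \<Rightarrow> 'm \<Rightarrow> real) \<Rightarrow> ('n \<Rightarrow> 'm \<Rightarrow> real^'p) \<Rightarrow> 'n \<Rightarrow> 'm \<Rightarrow> bool" where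
  "is_minimizer f g x u \<longleftrightarrow> feasible g x u \<and> (\<forall>v. feasible g x v \<longrightarrow> f x u \<le> f x v)"

definition ustar :: "('n \<Rightarrow> 'm \<Rightarrow> real) \<Rightarrow> ('n \<Rightarrow> 'm \<Rightarrow> real^'p) \<Rightarrow> 'n \<Rightarrow> 'm" where
  "ustar f g x = (THE u. is_minimizer f g x u)"

definition LCF :: "('n::metric_space \<Rightarrow> 'm::metric_space \<Rightarrow> real^'p) \<Rightarrow> 'n \<Rightarrow> bool" where
  "LCF g x \<longleftrightarrow> (\<exists>K \<delta>. compact K \<and> \<delta> > 0 \<and>
      (\<forall>y. dist y x < \<delta> \<longrightarrow> (\<exists>u\<in>K. feasible g y u)))"

definition locally_bounded_at :: "('a::topological_space \<Rightarrow> 'b::real_normed_vector) \<Rightarrow> 'a \<Rightarrow> bool" where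
  "locally_bounded_at \<phi> x0 \<longleftrightarrow> (\<exists>U B. open U \<and> x0 \<in> U \<and> B > 0 \<and> (\<forall>x\<in>U. norm (\<phi> x) \<le> B))"

end

theory Submission
  imports Defs
begin

lemma sconv_imp_conv:
  assumes "strictly_convex_on UNIV h"
  shows "convex_on UNIV h"
proof -
  have "h ((1 - t) *\<^sub>R x + t *\<^sub>R y) \<le> (1 - t) * h x + t * h y"
    if "0 \<le> t" "t \<le> 1" for x y t
  proof (cases "x = y \<or> t = 0 \<or> t = 1")
    case True
    then show ?thesis
    proof (elim disjE)
      assume "x = y"
      have e1: "(1 - t) *\<^sub>R x + t *\<^sub>R x = x" by (metis add_diff_cancel_left' diff_add_cancel scaleR_add_left scaleR_one)
      have e2: "(1 - t) * h x + t * h x = h x" by (simp add: algebra_simps)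
      show ?thesis using e1 e2 \<open>x = y\<close> by simp
    qed auto
  next
    case False
    then have "x \<noteq> y" "0 < t" "t < 1" using that by auto
    then show ?thesis using assms unfolding strictly_convex_on_def
      by (meson less_imp_le UNIV_I)
  qed
  then show ?thesis by (intro convex_onI) auto
qed

lemma ray_lemma:
  fixes h :: "'a::real_normed_vector \<Rightarrow> real"
  assumes conv: "convex_on UNIV h" and cont: "continuous_on UNIV h"
    and ray: "\<And>R. R \<ge> 0 \<Longrightarrow> h (a + R *\<^sub>R d) \<le> c"
    and R: "R \<ge> 0"
  shows "h (b + R *\<^sub>R d) \<le> h b"
proof -
  define t where "t = (\<lambda>n::nat. 1 / (real n + 1))"
  have t0: "t \<longlonglongrightarrow> 0" unfolding t_def using LIMSEQ_inverse_real_of_nat by (simp add: inverse_eq_divide add.commute)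
  have tpos: "t n > 0" "t n \<le> 1" for n unfolding t_def by auto
  define p where "p = (\<lambda>n. (1 - t n) *\<^sub>R b + t n *\<^sub>R (a + (R / t n) *\<^sub>R d))"
  have pe: "p n = (1 - t n) *\<^sub>R b + t n *\<^sub>R a + R *\<^sub>R d" for n
    using tpos[of n] by (simp add: p_def algebra_simps)
  have "(\<lambda>n. (1 - t n) *\<^sub>R b + t n *\<^sub>R a + R *\<^sub>R d) \<longlonglongrightarrow> (1 - 0) *\<^sub>R b + 0 *\<^sub>R a + R *\<^sub>R d"
    by (intro tendsto_add tendsto_scaleR tendsto_diff t0 tendsto_const)
  note pl0 = this
  have pl: "p \<longlonglongrightarrow> b + R *\<^sub>R d" proof -
    have "p = (\<lambda>n. (1 - t n) *\<^sub>R b + t n *\<^sub>R a + R *\<^sub>R d)" using pe by (rule ext)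
    with pl0 show ?thesis by simp
  qed
  have hp: "(\<lambda>n. h (p n)) \<longlonglongrightarrow> h (b + R *\<^sub>R d)"
    by (rule continuous_on_tendsto_compose[OF cont pl]) auto
  have "(\<lambda>n. (1 - t n) * h b + t n * c) \<longlonglongrightarrow> (1 - 0) * h b + 0 * c"
    by (intro tendsto_add tendsto_mult tendsto_diff t0 tendsto_const)
  then have rl: "(\<lambda>n. (1 - t n) * h b + t n * c) \<longlonglongrightarrow> h b" by simp
  have le: "h (p n) \<le> (1 - t n) * h b + t n * c" for n
  proof -
    have "h (p n) \<le> (1 - t n) * h b + t n * h (a + (R / t n) *\<^sub>R d)"
      unfolding p_def using tpos[of n] by (intro convex_onD[OF conv]) auto
    also have "\<dots> \<le> (1 - t n) * h b + t n * c"
      using ray[of "R / t n"] tpos[of n] R by (intro add_left_mono mult_left_mono) auto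
    finally show ?thesis .
  qed
  show ?thesis using LIMSEQ_le[OF hp rl] le by blast
qed


lemma ustar_min:
  fixes f :: "'a \<Rightarrow> 'b::real_vector \<Rightarrow> real" and g :: "'a \<Rightarrow> 'b \<Rightarrow> real^'p"
  assumes f_sconv: "\<And>x. strictly_convex_on UNIV (f x)"
    and g_conv: "\<And>x i. convex_on UNIV (\<lambda>u. g x u $ i)"
    and ex_min: "\<And>x. \<exists>u. is_minimizer f g x u"
  shows "is_minimizer f g x (ustar f g x)"
proof -
  obtain u where u: "is_minimizer f g x u" using ex_min by blast
  have uniq: "v = u" if v: "is_minimizer f g x v" for v
  proof (rule ccontr)
    assume ne: "v \<noteq> u"
    define m where "m = (1 - 1/2) *\<^sub>R u + (1/2::real) *\<^sub>R v"
    have "g x m $ i \<le> 0" for i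
    proof -
      have "g x m $ i \<le> (1 - 1/2) * g x u $ i + (1/2) * g x v $ i"
        unfolding m_def by (rule convex_onD[OF g_conv]) auto
      moreover have "g x u $ i \<le> 0" "g x v $ i \<le> 0" using u v by (auto simp: is_minimizer_def feasible_def)
      moreover have "(1 - 1/2) * g x u $ i \<le> 0" "(1/2) * g x v $ i \<le> 0"
        using calculation(2,3) by (auto intro: mult_nonneg_nonpos)
      ultimately show ?thesis by linarith
    qed
    then have fm: "feasible g x m" by (simp add: feasible_def)
    have "f x m < (1 - 1/2) * f x u + (1/2) * f x v"
    proof -
      have "(0::real) < 1/2" "(1/2::real) < 1" by auto
      then show ?thesis unfolding m_def using f_sconv[of x] ne[symmetric] unfolding strictly_convex_on_def
        by (meson UNIV_I)
    qed
    moreover have "f x u \<le> f x v" "f x v \<le> f x u" "f x u \<le> f x m"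
      using u v fm by (auto simp: is_minimizer_def)
    moreover have "(1 - 1/2) * f x u + (1/2) * f x v = f x u"
      using calculation(2,3) by simp
    ultimately show False by simp
  qed
  show ?thesis unfolding ustar_def using u uniq by (rule theI)
qed

theorem proposition3p7:
  fixes f :: "real^'n \<Rightarrow> real^'m \<Rightarrow> real"
    and g :: "real^'n \<Rightarrow> real^'m \<Rightarrow> real^'p"
    and x0 :: "real^'n"
  assumes f_cont: "continuous_on UNIV (\<lambda>(x, u). f x u)"
    and g_cont: "continuous_on UNIV (\<lambda>(x, u). g x u)"
    and f_sconv: "\<And>x. strictly_convex_on UNIV (f x)"
    and g_conv: "\<And>x i. convex_on UNIV (\<lambda>u. g x u $ i)"
    and ex_min: "\<And>x. \<exists>u. is_minimizer f g x u"
  shows "locally_bounded_at (ustar f g) x0 \<longleftrightarrow> LCF g x0"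
proof
  assume "locally_bounded_at (ustar f g) x0"
  then obtain U B where U: "open U" "x0 \<in> U" "B > 0" "\<forall>x\<in>U. norm (ustar f g x) \<le> B"
    unfolding locally_bounded_at_def by blast
  obtain e where e: "e > 0" "ball x0 e \<subseteq> U" using open_contains_ball U by blast
  show "LCF g x0" unfolding LCF_def
  proof (intro exI conjI allI impI)
    show "compact (cball (0::real^'m) B)" by simp
    show "e > 0" by fact
    fix y :: "real^'n" assume "dist y x0 < e"
    then have "y \<in> U" using e by (auto simp: dist_commute)
    then show "\<exists>u\<in>cball 0 B. feasible g y u"
      using U(4) ustar_min[OF f_sconv g_conv ex_min, of y] by (auto simp: is_minimizer_def)
  qed
next
  assume "LCF g x0"
  then obtain K \<delta> where K: "compact K" "\<delta> > 0" "\<And>y. dist y x0 < \<delta> \<Longrightarrow> \<exists>u\<in>K. feasible g y u"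
    unfolding LCF_def by blast
  obtain M where M: "M > 0" "\<And>u. u \<in> K \<Longrightarrow> norm u \<le> M"
    using compact_imp_bounded[OF K(1)] bounded_pos by blast
  have isF: "isCont (\<lambda>(x, u). f x u) z" for z
    using f_cont continuous_on_eq_continuous_at open_UNIV by blast
  have isG: "isCont (\<lambda>(x, u). g x u) z" for z
    using g_cont continuous_on_eq_continuous_at open_UNIV by blast
  have fc: "(\<lambda>k. f (A k) (W k)) \<longlonglongrightarrow> f a w" if "A \<longlonglongrightarrow> a" "W \<longlonglongrightarrow> w" for A W a w
    using isCont_tendsto_compose[OF isF tendsto_Pair[OF that]] by simp
  have gc: "(\<lambda>k. g (A k) (W k) $ i) \<longlonglongrightarrow> g a w $ i" if "A \<longlonglongrightarrow> a" "W \<longlonglongrightarrow> w" for A W a w i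
    using tendsto_vec_nth[OF isCont_tendsto_compose[OF isG tendsto_Pair[OF that]]] by simp
  have fconv: "convex_on UNIV (f x)" for x using sconv_imp_conv[OF f_sconv] .
  show "locally_bounded_at (ustar f g) x0"
  proof (rule ccontr)
    assume nlb: "\<not> ?thesis"
    have "\<exists>x. dist x x0 < min \<delta> (1/(real k+1)) \<and> norm (ustar f g x) > real k + 2*M" for k
    proof (rule ccontr)
      assume "\<not> ?thesis"
      then have "\<forall>x\<in>ball x0 (min \<delta> (1/(real k+1))). norm (ustar f g x) \<le> real k + 2*M"
        by (metis (no_types) dist_commute mem_ball min_less_iff_conj not_less)
      then have "locally_bounded_at (ustar f g) x0" unfolding locally_bounded_at_def
        using K(2) M(1) by (intro exI[of _ "ball x0 (min \<delta> (1/(real k+1)))"] exI[of _ "real k + 2*M"]) auto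
      with nlb show False by simp
    qed
    then obtain X where X: "\<And>k. dist (X k) x0 < min \<delta> (1/(real k+1))"
      "\<And>k. norm (ustar f g (X k)) > real k + 2*M" by metis
    have "\<exists>v\<in>K. feasible g (X k) v" for k using K(3) X(1)[of k] by simp
    then obtain V where V: "\<And>k. V k \<in> K" "\<And>k. feasible g (X k) (V k)" by metis
    define U where "U k = ustar f g (X k)" for k
    have Umin: "is_minimizer f g (X k) (U k)" for k
      unfolding U_def by (rule ustar_min[OF f_sconv g_conv ex_min])
    define D where "D k = norm (U k - V k)" for k
    have Dgt: "D k > real k + M" for k
    proof -
      have "norm (U k) \<le> D k + norm (V k)" unfolding D_def
        by (metis diff_add_cancel norm_triangle_ineq)
      moreover have "norm (V k) \<le> M" using M(2) V(1) by blast
      moreover have "norm (U k) > real k + 2*M" using X(2) unfolding U_def by blast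
      ultimately show ?thesis by linarith
    qed
    have Dpos: "D k > 0" for k using Dgt[of k] M(1) by linarith
    define Dd where "Dd k = (1 / D k) *\<^sub>R (U k - V k)" for k
    have Dd1: "norm (Dd k) = 1" for k
      using Dpos[of k] unfolding Dd_def by (simp add: D_def[symmetric])
    have "\<forall>k. (V k, Dd k) \<in> K \<times> sphere 0 1" using V(1) Dd1 by simp
    note inS = this
    obtain l r where lr: "l \<in> K \<times> sphere 0 1" "strict_mono r" "((\<lambda>k. (V k, Dd k)) \<circ> r) \<longlonglongrightarrow> l"
      by (rule seq_compactE[OF compact_imp_seq_compact[OF compact_Times[OF K(1) compact_sphere]] inS])
    obtain vb d where l: "l = (vb, d)" by fastforce
    have vbK: "vb \<in> K" "norm d = 1" using lr(1) l by auto
    have Vl: "(\<lambda>k. V (r k)) \<longlonglongrightarrow> vb" using tendsto_fst[OF lr(3)] l by (simp add: o_def)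
    have Dl: "(\<lambda>k. Dd (r k)) \<longlonglongrightarrow> d" using tendsto_snd[OF lr(3)] l by (simp add: o_def)
    have Xl: "X \<longlonglongrightarrow> x0"
    proof (rule metric_LIMSEQ_I)
      fix e :: real assume "e > 0"
      then obtain N where N: "inverse (real (Suc N)) < e" using reals_Archimedean by blast
      show "\<exists>no. \<forall>n\<ge>no. dist (X n) x0 < e"
      proof (intro exI allI impI)
        fix n assume "n \<ge> N"
        then have "1 / (real n + 1) \<le> inverse (real (Suc N))"
          by (simp add: inverse_eq_divide frac_le)
        then show "dist (X n) x0 < e" using X(1)[of n] N by linarith
      qed
    qed
    have Xrl: "(\<lambda>k. X (r k)) \<longlonglongrightarrow> x0" using LIMSEQ_subseq_LIMSEQ[OF Xl lr(2)] by (simp add: o_def)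
    have ray: "f x0 (vb + R *\<^sub>R d) \<le> f x0 vb \<and> (\<forall>i. g x0 (vb + R *\<^sub>R d) $ i \<le> 0)" if R: "R \<ge> 0" for R
    proof -
      define W where "W k = V k + R *\<^sub>R Dd k" for k
      have key: "f (X k) (W k) \<le> f (X k) (V k) \<and> (\<forall>i. g (X k) (W k) $ i \<le> 0)" if kR: "real k \<ge> R" for k
      proof -
        define t where "t = R / D k"
        have t01: "0 \<le> t" "t \<le> 1" using R kR Dgt[of k] Dpos[of k] M(1) unfolding t_def by auto
        have Wk: "W k = (1 - t) *\<^sub>R V k + t *\<^sub>R U k"
          unfolding W_def Dd_def t_def by (simp add: algebra_simps)
        have fu: "f (X k) (U k) \<le> f (X k) (V k)" using Umin V(2) by (auto simp: is_minimizer_def)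
        have "f (X k) (W k) \<le> (1 - t) * f (X k) (V k) + t * f (X k) (U k)"
          unfolding Wk using t01 by (intro convex_onD[OF fconv]) auto
        also have "\<dots> \<le> (1 - t) * f (X k) (V k) + t * f (X k) (V k)"
          using fu t01 by (intro add_left_mono mult_left_mono) auto
        finally have f1: "f (X k) (W k) \<le> f (X k) (V k)" by (simp add: algebra_simps)
        have "g (X k) (W k) $ i \<le> 0" for i
        proof -
          have "g (X k) (W k) $ i \<le> (1 - t) * g (X k) (V k) $ i + t * g (X k) (U k) $ i"
            unfolding Wk using t01 by (intro convex_onD[OF g_conv]) auto
          moreover have "g (X k) (V k) $ i \<le> 0" "g (X k) (U k) $ i \<le> 0"
            using Umin V(2) by (auto simp: is_minimizer_def feasible_def)
          moreover have "(1 - t) * g (X k) (V k) $ i \<le> 0" "t * g (X k) (U k) $ i \<le> 0"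
            using calculation(2,3) t01 by (auto intro: mult_nonneg_nonpos)
          ultimately show ?thesis by linarith
        qed
        with f1 show ?thesis by blast
      qed
      obtain N :: nat where N: "R \<le> real N" using real_arch_simple by blast
      have ev: "eventually (\<lambda>k. real (r k) \<ge> R) sequentially"
        unfolding eventually_sequentially
      proof (intro exI allI impI)
        fix k assume "k \<ge> N"
        then have "N \<le> r k" using seq_suble[OF lr(2), of k] by linarith
        then show "real (r k) \<ge> R" using N by linarith
      qed
      have Wl: "(\<lambda>k. W (r k)) \<longlonglongrightarrow> vb + R *\<^sub>R d"
        unfolding W_def by (intro tendsto_add tendsto_scaleR Vl Dl tendsto_const)
      have "f x0 (vb + R *\<^sub>R d) \<le> f x0 vb"
        by (rule tendsto_le[OF trivial_limit_sequentially fc[OF Xrl Vl] fc[OF Xrl Wl]])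
           (rule eventually_mono[OF ev], use key in blast)
      moreover have "g x0 (vb + R *\<^sub>R d) $ i \<le> 0" for i
        by (rule tendsto_le[OF trivial_limit_sequentially tendsto_const gc[OF Xrl Wl]])
           (rule eventually_mono[OF ev], use key in blast)
      ultimately show ?thesis by blast
    qed
    define u0 where "u0 = ustar f g x0"
    have u0: "is_minimizer f g x0 u0" unfolding u0_def by (rule ustar_min[OF f_sconv g_conv ex_min])
    have fx0c: "continuous_on UNIV (f x0)"
    proof (rule continuous_at_imp_continuous_on, intro ballI)
      fix u :: "real^'m"
      show "isCont (f x0) u" unfolding isCont_def
        using isCont_tendsto_compose[OF isF tendsto_Pair[OF tendsto_const[of x0] tendsto_ident_at[of u UNIV]]] by simp
    qed
    have gx0c: "continuous_on UNIV (\<lambda>u. g x0 u $ i)" for i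
    proof (rule continuous_at_imp_continuous_on, intro ballI)
      fix u :: "real^'m"
      show "isCont (\<lambda>u. g x0 u $ i) u" unfolding isCont_def
        using tendsto_vec_nth[OF isCont_tendsto_compose[OF isG tendsto_Pair[OF tendsto_const[of x0] tendsto_ident_at[of u UNIV]]]] by simp
    qed
    have fr: "f x0 (u0 + R *\<^sub>R d) \<le> f x0 u0" if "R \<ge> 0" for R
      by (rule ray_lemma[OF fconv fx0c _ that, where a=vb and c="f x0 vb"]) (use ray in blast)
    have gr: "feasible g x0 (u0 + R *\<^sub>R d)" if "R \<ge> 0" for R
    proof -
      have "g x0 (u0 + R *\<^sub>R d) $ i \<le> g x0 u0 $ i" for i
        by (rule ray_lemma[OF g_conv gx0c _ that, where a=vb and c=0]) (use ray in blast)
      moreover have "g x0 u0 $ i \<le> 0" for i using u0 by (auto simp: is_minimizer_def feasible_def)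
      ultimately show ?thesis unfolding feasible_def by (meson order_trans)
    qed
    have dne: "d \<noteq> 0" using vbK(2) by auto
    have mid: "(1 - 1/2) *\<^sub>R u0 + (1/2::real) *\<^sub>R (u0 + 1 *\<^sub>R d) = u0 + (1/2) *\<^sub>R d"
    proof -
      have "(1 - 1/2) *\<^sub>R u0 + (1/2::real) *\<^sub>R (u0 + 1 *\<^sub>R d) = ((1/2) *\<^sub>R u0 + (1/2::real) *\<^sub>R u0) + (1/2) *\<^sub>R d"
        by (simp add: scaleR_add_right add.assoc)
      also have "(1/2) *\<^sub>R u0 + (1/2::real) *\<^sub>R u0 = u0" by (simp flip: scaleR_add_left)
      finally show ?thesis .
    qed
    have "f x0 ((1 - 1/2) *\<^sub>R u0 + (1/2::real) *\<^sub>R (u0 + 1 *\<^sub>R d)) < (1 - 1/2) * f x0 u0 + (1/2) * f x0 (u0 + 1 *\<^sub>R d)"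
    proof -
      have "u0 \<noteq> u0 + 1 *\<^sub>R d" using dne by simp
      moreover have "(0::real) < 1/2" "(1/2::real) < 1" by auto
      ultimately show ?thesis using f_sconv[of x0] unfolding strictly_convex_on_def
        by (meson UNIV_I)
    qed
    then have "f x0 (u0 + (1/2) *\<^sub>R d) < f x0 u0" using fr[of 1] mid by simp
    moreover have "f x0 u0 \<le> f x0 (u0 + (1/2) *\<^sub>R d)" using u0 gr[of "1/2"] by (auto simp: is_minimizer_def)
    ultimately show False by simp
  qed
qed

end
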